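(* For every constant $c>0$ there is a constant $C>0$ such that for all integers $d,k,t$ with $1\le k\le c\sqrt{d}$, $2k\le d$, and $0\le t\le k-1$, \[ \|\mathcal{D}_t\|_1\le C\binom{d-k}{k-t}\binom{d}{t}2^{k-t}, \] where $\mathcal{D}_t$ is the $\binom{[d]}{k}\times\binom{[d]}{k}$ matrix with $\mathcal{D}_t(A,B)=1$ if $|A\cap B|=t$ and $0$ otherwise.
   Context: $\binom{[d]}{k}$ denotes the set of $k$-element subsets of $[d]=\{1,\dots,d\}$; $\mathcal{D}_t$ is the adjacency matrix of the generalized Johnson graph. $\|\cdot\|_1$ is the trace norm (sum of absolute values of eigenvalues for this symmetric matrix). *)

theory Defs
  imports "Jordan_Normal_Form.Char_Poly"
begin

definition ksubsets :: "nat \<Rightarrow> nat \<Rightarrow> nat set set" where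
  "ksubsets d k = {A. A \<subseteq> {1..d} \<and> card A = k}"

(* A fixed enumeration (without repetition) of the k-subsets of [d];
   the trace norm below does not depend on the choice (permutation similarity). *)
definition ksub_list :: "nat \<Rightarrow> nat \<Rightarrow> nat set list" where
  "ksub_list d k = (SOME xs. distinct xs \<and> set xs = ksubsets d k)"

definition johnson_mat :: "nat \<Rightarrow> nat \<Rightarrow> nat \<Rightarrow> real mat" where
  "johnson_mat d k t =
     (let xs = ksub_list d k
      in mat (length xs) (length xs)
           (\<lambda>(i, j). if card (xs ! i \<inter> xs ! j) = t then 1 else 0))"

definition trace_norm_sym :: "real mat \<Rightarrow> real" where
  "trace_norm_sym M =
     (\<Sum>a\<in>{a. poly (char_poly M) a = 0}. real (order a (char_poly M)) * \<bar>a\<bar>)"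

end

theory Submission
  imports Defs "Jordan_Normal_Form.Schur_Decomposition"
begin

definition ip :: "nat \<Rightarrow> (nat \<Rightarrow> complex) \<Rightarrow> (nat \<Rightarrow> complex) \<Rightarrow> complex" where
  "ip n x y = (\<Sum>a<n. x a * cnj (y a))"

definition mv :: "nat \<Rightarrow> (nat \<Rightarrow> nat \<Rightarrow> complex) \<Rightarrow> (nat \<Rightarrow> complex) \<Rightarrow> nat \<Rightarrow> complex" where
  "mv n M v a = (\<Sum>b<n. M a b * v b)"

definition spn :: "nat \<Rightarrow> (nat \<Rightarrow> nat \<Rightarrow> complex) \<Rightarrow> nat \<Rightarrow> (nat \<Rightarrow> complex) \<Rightarrow> bool" where
  "spn n f k v = (\<exists>r. \<forall>a<n. v a = (\<Sum>l<k. r l * f l a))"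

lemma ip_cnj: "ip n y x = cnj (ip n x y)"
  unfolding ip_def by (simp add: mult.commute)

lemma ip_self_real: "ip n x x = of_real (\<Sum>a<n. (cmod (x a))\<^sup>2)"
  unfolding ip_def by (simp only: of_real_sum complex_norm_square)

lemma ip_self_zero: assumes "ip n x x = 0" "a < n" shows "x a = 0"
proof -
  have "(\<Sum>a<n. (cmod (x a))\<^sup>2) = 0" using assms(1) unfolding ip_self_real of_real_eq_0_iff .
  hence "(cmod (x a))\<^sup>2 = 0" using assms(2) by (subst (asm) sum_nonneg_eq_0_iff) auto
  thus ?thesis by simp
qed

lemma spn_zero: "spn n f k (\<lambda>a. 0)"
  unfolding spn_def by (rule exI[of _ "\<lambda>_. 0"]) simp

lemma spn_add: "spn n f k v \<Longrightarrow> spn n f k w \<Longrightarrow> spn n f k (\<lambda>a. v a + w a)"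
  unfolding spn_def
proof (elim exE)
  fix r s assume r: "\<forall>a<n. v a = (\<Sum>l<k. r l * f l a)" and s: "\<forall>a<n. w a = (\<Sum>l<k. s l * f l a)"
  show "\<exists>q. \<forall>a<n. v a + w a = (\<Sum>l<k. q l * f l a)"
    by (rule exI[of _ "\<lambda>l. r l + s l"]) (simp add: r s distrib_right sum.distrib)
qed

lemma spn_smult: "spn n f k v \<Longrightarrow> spn n f k (\<lambda>a. c * v a)"
  unfolding spn_def
proof (elim exE)
  fix r assume r: "\<forall>a<n. v a = (\<Sum>l<k. r l * f l a)"
  show "\<exists>q. \<forall>a<n. c * v a = (\<Sum>l<k. q l * f l a)"
    by (rule exI[of _ "\<lambda>l. c * r l"]) (simp add: r sum_distrib_left mult.assoc)
qed

lemma spn_sum: "finite F \<Longrightarrow> (\<And>m. m \<in> F \<Longrightarrow> spn n f k (v m)) \<Longrightarrow>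
   spn n f k (\<lambda>a. \<Sum>m\<in>F. c m * v m a)"
proof (induction F rule: finite_induct)
  case empty thus ?case using spn_zero by simp
next
  case (insert x F)
  have "spn n f k (\<lambda>a. c x * v x a + (\<Sum>m\<in>F. c m * v m a))"
    by (rule spn_add[OF spn_smult]) (use insert in auto)
  thus ?case using insert by simp
qed

lemma spn_mono: "spn n f k v \<Longrightarrow> k \<le> k' \<Longrightarrow> spn n f k' v"
  unfolding spn_def
proof (elim exE)
  fix r assume r: "\<forall>a<n. v a = (\<Sum>l<k. r l * f l a)" and kk: "k \<le> k'"
  show "\<exists>q. \<forall>a<n. v a = (\<Sum>l<k'. q l * f l a)"
  proof (rule exI[of _ "\<lambda>l. if l < k then r l else 0"], intro allI impI)
    fix a assume "a < n"
    have "(\<Sum>l<k'. (if l < k then r l else 0) * f l a) = (\<Sum>l<k. (if l < k then r l else 0) * f l a)"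
      by (rule sum.mono_neutral_right) (use kk in auto)
    also have "\<dots> = (\<Sum>l<k. r l * f l a)" by simp
    finally show "v a = (\<Sum>l<k'. (if l < k then r l else 0) * f l a)" using r \<open>a<n\<close> by (simp only:)
  qed
qed

lemma spn_self: "l < k \<Longrightarrow> spn n f k (f l)"
  unfolding spn_def
proof (rule exI[of _ "\<lambda>m. if m = l then 1 else 0"], intro allI impI)
  fix a assume "l < k"
  have "(\<Sum>m<k. (if m = l then 1 else 0) * f m a) = (\<Sum>m<k. if m = l then f m a else 0)"
    by (rule sum.cong) auto
  also have "\<dots> = f l a" using \<open>l<k\<close> by (simp add: sum.delta)
  finally show "f l a = (\<Sum>m<k. (if m = l then 1 else 0) * f m a)" by simp
qed

lemma spn_cong: "spn n f k v \<Longrightarrow> (\<And>a. a < n \<Longrightarrow> w a = v a) \<Longrightarrow> spn n f k w"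
  unfolding spn_def by auto

lemma spn_orth: assumes "spn n f k v" "\<And>m. m < k \<Longrightarrow> ip n w (f m) = 0"
  shows "ip n w v = 0"
proof -
  obtain r where r: "\<forall>a<n. v a = (\<Sum>l<k. r l * f l a)" using assms(1) unfolding spn_def by auto
  have "ip n w v = (\<Sum>a<n. w a * cnj (\<Sum>l<k. r l * f l a))" unfolding ip_def
    by (rule sum.cong) (auto simp: r)
  also have "\<dots> = (\<Sum>l<k. cnj (r l) * ip n w (f l))"
    unfolding ip_def by (simp add: sum_distrib_left sum_distrib_right sum.swap[of _ "{..<k}"] mult_ac)
  also have "\<dots> = 0" using assms(2) by simp
  finally show ?thesis .
qed

lemma spn_mv: assumes "spn n f k v" "\<And>l. l < k \<Longrightarrow> spn n f k' (mv n M (f l))"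
  shows "spn n f k' (mv n M v)"
proof -
  obtain r where r: "\<forall>a<n. v a = (\<Sum>l<k. r l * f l a)" using assms(1) unfolding spn_def by auto
  have "spn n f k' (\<lambda>a. \<Sum>l\<in>{..<k}. r l * mv n M (f l) a)"
    by (rule spn_sum) (use assms(2) in auto)
  moreover have "mv n M v a = (\<Sum>l\<in>{..<k}. r l * mv n M (f l) a)" for a
    unfolding mv_def
    by (simp add: r sum_distrib_left sum.swap[of _ "{..<k}"] mult_ac)
  ultimately show ?thesis by (simp add: spn_cong)
qed


lemma spn_fam_cong: "spn n f k v \<Longrightarrow> (\<And>m a. m < k \<Longrightarrow> a < n \<Longrightarrow> g m a = f m a) \<Longrightarrow> spn n g k v"
  unfolding spn_def by (auto intro!: sum.cong)

lemma ip_diff_sum: "ip n (\<lambda>a. x a - (\<Sum>m\<in>F. c m * y m a)) z = ip n x z - (\<Sum>m\<in>F. c m * ip n (y m) z)"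
  unfolding ip_def
  by (simp add: algebra_simps sum_subtractf sum_distrib_left sum_distrib_right sum.swap[of _ F])

lemma nonspan:
  assumes QP: "\<And>i l. i < n \<Longrightarrow> l < n \<Longrightarrow> (\<Sum>a<n. Q i a * p l a) = (if i = l then 1 else 0)"
    and i: "i < n" and v: "spn n p i v"
  shows "(\<Sum>a<n. Q i a * v a) = 0"
proof -
  obtain r where r: "\<forall>a<n. v a = (\<Sum>l<i. r l * p l a)" using v unfolding spn_def by auto
  have "(\<Sum>a<n. Q i a * v a) = (\<Sum>a<n. Q i a * (\<Sum>l<i. r l * p l a))"
    by (rule sum.cong) (auto simp: r)
  also have "\<dots> = (\<Sum>l<i. r l * (\<Sum>a<n. Q i a * p l a))"
    by (simp add: sum_distrib_left sum.swap[of _ "{..<i}"] mult_ac)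
  also have "\<dots> = 0" using QP i by (auto intro!: sum.neutral)
  finally show ?thesis .
qed

lemma gs_exists:
  assumes QP: "\<And>i l. i < n \<Longrightarrow> l < n \<Longrightarrow> (\<Sum>a<n. Q i a * p l a) = (if i = l then 1 else 0)"
  shows "i \<le> n \<Longrightarrow> \<exists>u. (\<forall>j<i. \<forall>m<i. j \<noteq> m \<longrightarrow> ip n (u j) (u m) = 0) \<and> (\<forall>j<i. ip n (u j) (u j) \<noteq> 0)
     \<and> (\<forall>j<i. spn n p (Suc j) (u j)) \<and> (\<forall>l<i. spn n u (Suc l) (p l))"
proof (induction i)
  case 0 show ?case by auto
next
  case (Suc i)
  then obtain u where o: "\<forall>j<i. \<forall>m<i. j \<noteq> m \<longrightarrow> ip n (u j) (u m) = 0"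
    and nz: "\<forall>j<i. ip n (u j) (u j) \<noteq> 0" and sp: "\<forall>j<i. spn n p (Suc j) (u j)"
    and su: "\<forall>l<i. spn n u (Suc l) (p l)" by auto
  have i: "i < n" using Suc by auto
  define c where "c m = ip n (p i) (u m) / ip n (u m) (u m)" for m
  define w where "w a = p i a - (\<Sum>m<i. c m * u m a)" for a
  define u' where "u' = u(i := w)"
  have u'i: "u' i = w" and u'm: "\<And>m. m < i \<Longrightarrow> u' m = u m" unfolding u'_def by auto
  have ow: "ip n w (u m) = 0" if m: "m < i" for m
  proof -
    have "ip n w (u m) = ip n (p i) (u m) - (\<Sum>m'<i. c m' * ip n (u m') (u m))"
      unfolding w_def[abs_def] by (rule ip_diff_sum)
    also have "(\<Sum>m'<i. c m' * ip n (u m') (u m)) = (\<Sum>m'<i. if m' = m then c m * ip n (u m) (u m) else 0)"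
      by (rule sum.cong) (use o m in auto)
    also have "\<dots> = c m * ip n (u m) (u m)" using m by simp
    also have "\<dots> = ip n (p i) (u m)" using nz m unfolding c_def by simp
    finally show ?thesis by simp
  qed
  have sumsp: "spn n p i (\<lambda>a. \<Sum>m\<in>{..<i}. c m * u m a)"
    by (rule spn_sum) (use sp in \<open>auto intro: spn_mono\<close>)
  have wsp: "spn n p (Suc i) w"
  proof -
    have "spn n p (Suc i) (\<lambda>a. p i a + (-1) * (\<Sum>m\<in>{..<i}. c m * u m a))"
      by (rule spn_add[OF spn_self spn_smult]) (use spn_mono[OF sumsp] in auto)
    thus ?thesis unfolding w_def by simp
  qed
  have wnz: "ip n w w \<noteq> 0"
  proof
    assume "ip n w w = 0"
    hence w0: "\<And>a. a < n \<Longrightarrow> w a = 0" using ip_self_zero by blast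
    have "spn n p i (p i)"
      by (rule spn_cong[OF sumsp]) (use w0 in \<open>auto simp: w_def\<close>)
    from nonspan[OF QP i this] QP[OF i i] show False by simp
  qed
  have pisp: "spn n u' (Suc i) (p i)"
  proof -
    have "spn n u' (Suc i) (\<lambda>a. 1 * u' i a + (\<Sum>m\<in>{..<i}. c m * u' m a))"
      by (rule spn_add[OF spn_smult[OF spn_self] spn_sum]) (auto intro: spn_self)
    moreover have "p i a = 1 * u' i a + (\<Sum>m\<in>{..<i}. c m * u' m a)" for a
      using u'm by (simp add: u'i w_def)
    ultimately show ?thesis by (simp add: spn_cong)
  qed
  show ?case
  proof (rule exI[of _ u'], intro conjI allI impI)
    fix j m assume "j < Suc i" "m < Suc i" "j \<noteq> m"
    then consider "j < i" "m < i" | "j = i" "m < i" | "m = i" "j < i" by linarith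
    thus "ip n (u' j) (u' m) = 0"
    proof cases
      case 1 thus ?thesis using o u'm \<open>j \<noteq> m\<close> by simp
    next
      case 2 thus ?thesis using ow u'i u'm by simp
    next
      case 3 thus ?thesis using ow u'i u'm by (subst ip_cnj) simp
    qed
  next
    fix j assume "j < Suc i"
    thus "ip n (u' j) (u' j) \<noteq> 0" using nz wnz u'i u'm by (cases "j = i") auto
  next
    fix j assume "j < Suc i"
    thus "spn n p (Suc j) (u' j)" using sp wsp u'i u'm by (cases "j = i") auto
  next
    fix l assume "l < Suc i"
    show "spn n u' (Suc l) (p l)"
    proof (cases "l = i")
      case True thus ?thesis using pisp by simp
    next
      case False
      hence "l < i" using \<open>l < Suc i\<close> by simp
      show ?thesis by (rule spn_fam_cong[OF su[rule_format, OF \<open>l < i\<close>]]) (use \<open>l < i\<close> u'm in auto)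
    qed
  qed
qed


lemma mat_mult_sum: "A \<in> carrier_mat n m \<Longrightarrow> B \<in> carrier_mat m k \<Longrightarrow> i < n \<Longrightarrow> j < k \<Longrightarrow>
  (A * B) $$ (i, j) = (\<Sum>b<m. A $$ (i, b) * B $$ (b, j))"
  by (auto simp: scalar_prod_def atLeast0LessThan intro!: sum.cong)

lemma flag:
  fixes A :: "complex mat"
  assumes A: "A \<in> carrier_mat n n"
  shows "\<exists>u. (\<forall>j<n. \<forall>m<n. j \<noteq> m \<longrightarrow> ip n (u j) (u m) = 0) \<and> (\<forall>j<n. ip n (u j) (u j) \<noteq> 0)
     \<and> (\<forall>i<n. \<forall>j<n. i < j \<longrightarrow> ip n (mv n (\<lambda>a b. A $$ (a, b)) (u i)) (u j) = 0)"
proof -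
  obtain es where es: "char_poly A = (\<Prod> a \<leftarrow> es. [:- a, 1:])"
    using char_poly_factorized[OF A] by auto
  obtain B P Q where sd: "schur_decomposition A es = (B, P, Q)" by (cases "schur_decomposition A es") auto
  from schur_decomposition[OF A es sd] have sw: "similar_mat_wit A B P Q" and ut: "upper_triangular B" by auto
  have dA: "dim_row A = n" using A by auto
  from sw[unfolded similar_mat_wit_def Let_def dA]
  have B: "B \<in> carrier_mat n n" and P: "P \<in> carrier_mat n n" and Q: "Q \<in> carrier_mat n n"
    and QP: "Q * P = 1\<^sub>m n" and AeQ: "A = P * B * Q" by auto
  define p where "p l a = P $$ (a, l)" for l a
  define Af where "Af a b = A $$ (a, b)" for a b
  have QP': "(\<Sum>a<n. Q $$ (i, a) * p l a) = (if i = l then 1 else 0)" if "i < n" "l < n" for i l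
  proof -
    have "(Q * P) $$ (i, l) = (\<Sum>a<n. Q $$ (i, a) * p l a)"
      unfolding p_def by (rule mat_mult_sum[OF Q P that])
    thus ?thesis using QP that by simp
  qed
  have AP: "A * P = P * B"
  proof -
    have "A * P = P * B * Q * P" using AeQ by simp
    also have "\<dots> = P * B * (Q * P)" using P B Q by (simp add: assoc_mult_mat[of _ n n _ n _ n])
    also have "\<dots> = P * B" using P B QP by simp
    finally show ?thesis .
  qed
  have Ap: "spn n p (Suc l) (mv n Af (p l))" if l: "l < n" for l
    unfolding spn_def
  proof (rule exI[of _ "\<lambda>m. B $$ (m, l)"], intro allI impI)
    fix a assume a: "a < n"
    have "mv n Af (p l) a = (A * P) $$ (a, l)"
      unfolding mv_def Af_def p_def by (rule mat_mult_sum[OF A P a l, symmetric])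
    also have "\<dots> = (\<Sum>m<n. P $$ (a, m) * B $$ (m, l))"
      unfolding AP by (rule mat_mult_sum[OF P B a l])
    also have "\<dots> = (\<Sum>m<Suc l. P $$ (a, m) * B $$ (m, l))"
    proof (rule sum.mono_neutral_right)
      show "\<forall>i\<in>{..<n} - {..<Suc l}. P $$ (a, i) * B $$ (i, l) = 0"
        using ut B unfolding upper_triangular_def by auto
    qed (use l in auto)
    finally show "mv n Af (p l) a = (\<Sum>m<Suc l. B $$ (m, l) * p m a)"
      unfolding p_def by (simp add: mult.commute)
  qed
  obtain u where o: "\<forall>j<n. \<forall>m<n. j \<noteq> m \<longrightarrow> ip n (u j) (u m) = 0"
    and nz: "\<forall>j<n. ip n (u j) (u j) \<noteq> 0" and sp: "\<forall>j<n. spn n p (Suc j) (u j)"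
    and su: "\<forall>l<n. spn n u (Suc l) (p l)"
    using gs_exists[of n "\<lambda>i a. Q $$ (i, a)" p n, OF QP'] by auto
  show ?thesis
  proof (rule exI[of _ u], intro conjI allI impI)
    fix i j assume ij: "i < n" "j < n" "i < j"
    have "spn n p (Suc i) (mv n Af (u i))"
      by (rule spn_mv[OF sp[rule_format, OF \<open>i<n\<close>]]) (use ij in \<open>auto intro: spn_mono[OF Ap]\<close>)
    moreover have "ip n (u j) (p m) = 0" if "m < Suc i" for m
      by (rule spn_orth[OF su[rule_format]]) (use that ij o in auto)
    ultimately have "ip n (u j) (mv n Af (u i)) = 0" by (rule spn_orth)
    thus "ip n (mv n (\<lambda>a b. A $$ (a, b)) (u i)) (u j) = 0"
      unfolding Af_def[symmetric] by (subst ip_cnj) simp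
  qed (use o nz in auto)
qed


lemma flag_mats:
  fixes u :: "nat \<Rightarrow> nat \<Rightarrow> complex"
  assumes o: "\<forall>j<n. \<forall>m<n. j \<noteq> m \<longrightarrow> ip n (u j) (u m) = 0" and nz: "\<forall>j<n. ip n (u j) (u j) \<noteq> 0"
  defines "U \<equiv> mat n n (\<lambda>(a, i). u i a)" and "V \<equiv> mat n n (\<lambda>(i, a). cnj (u i a) / ip n (u i) (u i))"
  shows "U \<in> carrier_mat n n" "V \<in> carrier_mat n n" "V * U = 1\<^sub>m n" "U * V = 1\<^sub>m n"
proof -
  show U: "U \<in> carrier_mat n n" and V: "V \<in> carrier_mat n n" unfolding U_def V_def by auto
  show VU: "V * U = 1\<^sub>m n"
  proof (rule eq_matI)
    fix i j assume ij: "i < dim_row (1\<^sub>m n)" "j < dim_col (1\<^sub>m n)"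
    hence "(V * U) $$ (i, j) = (\<Sum>a<n. V $$ (i, a) * U $$ (a, j))"
      using mat_mult_sum[OF V U] by simp
    also have "\<dots> = (\<Sum>a<n. u j a * cnj (u i a)) / ip n (u i) (u i)"
      using ij unfolding U_def V_def by (simp add: sum_divide_distrib mult_ac)
    also have "\<dots> = (if i = j then 1 else 0)"
      using ij o nz unfolding ip_def[symmetric] by auto
    finally show "(V * U) $$ (i, j) = 1\<^sub>m n $$ (i, j)" using ij by simp
  qed (auto simp: U_def V_def)
  show "U * V = 1\<^sub>m n" by (rule mat_mult_left_right_inverse[OF V U VU])
qed

lemma flag_trace:
  fixes u :: "nat \<Rightarrow> nat \<Rightarrow> complex"
  assumes o: "\<forall>j<n. \<forall>m<n. j \<noteq> m \<longrightarrow> ip n (u j) (u m) = 0" and nz: "\<forall>j<n. ip n (u j) (u j) \<noteq> 0"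
  shows "(\<Sum>i<n. ip n (mv n M (u i)) (u i) / ip n (u i) (u i)) = (\<Sum>a<n. M a a)"
proof -
  define U where "U = mat n n (\<lambda>(a, i). u i a)"
  define V where "V = mat n n (\<lambda>(i, a). cnj (u i a) / ip n (u i) (u i))"
  note fm = flag_mats[OF o nz, folded U_def V_def]
  have d: "(\<Sum>i<n. u i b * cnj (u i a) / ip n (u i) (u i)) = (if b = a then 1 else 0)"
    if "a < n" "b < n" for a b
  proof -
    have "(U * V) $$ (b, a) = (\<Sum>i<n. U $$ (b, i) * V $$ (i, a))"
      using mat_mult_sum[OF fm(1,2)] that by simp
    also have "\<dots> = (\<Sum>i<n. u i b * cnj (u i a) / ip n (u i) (u i))"
      using that unfolding U_def V_def by (intro sum.cong) auto
    finally show ?thesis using fm(4) that by simp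
  qed
  have "(\<Sum>i<n. ip n (mv n M (u i)) (u i) / ip n (u i) (u i))
      = (\<Sum>i<n. \<Sum>a<n. \<Sum>b<n. M a b * (u i b * cnj (u i a) / ip n (u i) (u i)))"
  proof -
    have e: "ip n (mv n M v) v = (\<Sum>a<n. \<Sum>b<n. M a b * (v b * cnj (v a)))" for v
      unfolding ip_def mv_def by (simp add: sum_distrib_right sum_distrib_left mult_ac)
    show ?thesis unfolding e by (simp only: sum_divide_distrib times_divide_eq_right)
  qed
  also have "\<dots> = (\<Sum>a<n. \<Sum>i<n. \<Sum>b<n. M a b * (u i b * cnj (u i a) / ip n (u i) (u i)))"
    by (rule sum.swap)
  also have "\<dots> = (\<Sum>a<n. \<Sum>b<n. \<Sum>i<n. M a b * (u i b * cnj (u i a) / ip n (u i) (u i)))"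
    by (rule sum.cong[OF refl], rule sum.swap)
  also have "\<dots> = (\<Sum>a<n. \<Sum>b<n. M a b * (\<Sum>i<n. u i b * cnj (u i a) / ip n (u i) (u i)))"
    by (simp add: sum_distrib_left)
  also have "\<dots> = (\<Sum>a<n. \<Sum>b<n. if b = a then M a b else 0)"
    by (intro sum.cong) (auto simp: d)
  also have "\<dots> = (\<Sum>a<n. M a a)" by simp
  finally show ?thesis .
qed

lemma flag_charpoly:
  fixes A :: "complex mat" and u :: "nat \<Rightarrow> nat \<Rightarrow> complex"
  assumes A: "A \<in> carrier_mat n n"
    and o: "\<forall>j<n. \<forall>m<n. j \<noteq> m \<longrightarrow> ip n (u j) (u m) = 0" and nz: "\<forall>j<n. ip n (u j) (u j) \<noteq> 0"
    and tri: "\<forall>i<n. \<forall>j<n. i < j \<longrightarrow> ip n (mv n (\<lambda>a b. A $$ (a, b)) (u i)) (u j) = 0"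
  shows "char_poly A = (\<Prod>i \<leftarrow> [0..<n]. [:- (ip n (mv n (\<lambda>a b. A $$ (a, b)) (u i)) (u i) / ip n (u i) (u i)), 1:])"
proof -
  define U where "U = mat n n (\<lambda>(a, i). u i a)"
  define V where "V = mat n n (\<lambda>(i, a). cnj (u i a) / ip n (u i) (u i))"
  note fm = flag_mats[OF o nz, folded U_def V_def]
  define C where "C = V * (A * U)"
  have C: "C \<in> carrier_mat n n" unfolding C_def using fm A by auto
  have Cij: "C $$ (j, i) = ip n (mv n (\<lambda>a b. A $$ (a, b)) (u i)) (u j) / ip n (u j) (u j)"
    if "i < n" "j < n" for i j
  proof -
    have AU: "(A * U) $$ (a, i) = mv n (\<lambda>a b. A $$ (a, b)) (u i) a" if "a < n" for a
      using mat_mult_sum[OF A fm(1) that \<open>i<n\<close>] \<open>i<n\<close> unfolding mv_def U_def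
      by (simp add: that)
    have "C $$ (j, i) = (\<Sum>a<n. V $$ (j, a) * (A * U) $$ (a, i))"
      unfolding C_def using mat_mult_sum[of V n n "A * U" n] fm A that by auto
    also have "\<dots> = (\<Sum>a<n. mv n (\<lambda>a b. A $$ (a, b)) (u i) a * cnj (u j a)) / ip n (u j) (u j)"
      using that AU unfolding V_def by (simp add: sum_divide_distrib mult_ac)
    finally show ?thesis unfolding ip_def .
  qed
  have ut: "upper_triangular C"
    unfolding upper_triangular_def using C Cij tri by auto
  have sim: "similar_mat A C"
  proof (rule similar_matI[of A C U V n])
    show "{A, C, U, V} \<subseteq> carrier_mat n n" using A C fm by auto
    show "U * V = 1\<^sub>m n" "V * U = 1\<^sub>m n" using fm by auto
    have "U * C = (U * V) * (A * U)"
      unfolding C_def using fm A by (subst assoc_mult_mat[of _ n n _ n _ n]) auto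
    also have "\<dots> = A * U" using fm A by simp
    finally have "U * C * V = A * U * V" by simp
    also have "\<dots> = A * (U * V)" using fm A by (subst assoc_mult_mat[of _ n n _ n _ n]) auto
    finally show "A = U * C * V" using fm A by simp
  qed
  have "char_poly A = char_poly C" by (rule char_poly_similar[OF sim])
  also have "\<dots> = (\<Prod> a \<leftarrow> diag_mat C. [:- a, 1:])" by (rule char_poly_upper_triangular[OF C ut])
  also have "diag_mat C = map (\<lambda>i. ip n (mv n (\<lambda>a b. A $$ (a, b)) (u i)) (u i) / ip n (u i) (u i)) [0..<n]"
    unfolding diag_mat_def using C Cij by auto
  finally show ?thesis by (simp add: comp_def)
qed

definition qf :: "nat \<Rightarrow> (nat \<Rightarrow> nat \<Rightarrow> real) \<Rightarrow> (nat \<Rightarrow> complex) \<Rightarrow> complex" where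
  "qf n M v = ip n (mv n (\<lambda>a b. complex_of_real (M a b)) v) v"

lemma qf_decomp:
  assumes "\<And>a b. a < n \<Longrightarrow> b < n \<Longrightarrow> Af a b = complex_of_real (\<Sum>s\<in>F. c s * Ms s a b)"
  shows "ip n (mv n Af v) v = (\<Sum>s\<in>F. complex_of_real (c s) * qf n (Ms s) v)"
proof -
  have "ip n (mv n Af v) v = (\<Sum>a<n. \<Sum>b<n. Af a b * v b * cnj (v a))"
    unfolding ip_def mv_def by (simp add: sum_distrib_right)
  also have "\<dots> = (\<Sum>a<n. \<Sum>b<n. \<Sum>s\<in>F. complex_of_real (c s) * (complex_of_real (Ms s a b) * v b * cnj (v a)))"
    by (intro sum.cong refl) (simp add: assms of_real_sum sum_distrib_right sum_distrib_left mult_ac)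
  also have "\<dots> = (\<Sum>a<n. \<Sum>s\<in>F. \<Sum>b<n. complex_of_real (c s) * (complex_of_real (Ms s a b) * v b * cnj (v a)))"
    by (intro sum.cong refl) (rule sum.swap)
  also have "\<dots> = (\<Sum>s\<in>F. \<Sum>a<n. \<Sum>b<n. complex_of_real (c s) * (complex_of_real (Ms s a b) * v b * cnj (v a)))"
    by (rule sum.swap)
  also have "\<dots> = (\<Sum>s\<in>F. complex_of_real (c s) * qf n (Ms s) v)"
    unfolding qf_def ip_def mv_def by (simp add: sum_distrib_left sum_distrib_right)
  finally show ?thesis .
qed

lemma ip_self_pos: assumes "ip n x x \<noteq> 0"
  shows "ip n x x = complex_of_real (Re (ip n x x))" "Re (ip n x x) > 0"
proof -
  define S where "S = (\<Sum>a<n. (cmod (x a))\<^sup>2)"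
  have e: "ip n x x = complex_of_real S" unfolding S_def by (rule ip_self_real)
  thus "ip n x x = complex_of_real (Re (ip n x x))" by simp
  have "S \<ge> 0" unfolding S_def by (intro sum_nonneg) auto
  moreover have "S \<noteq> 0" using assms e by auto
  ultimately show "Re (ip n x x) > 0" using e by simp
qed

lemma prodlin_nz: "(\<Prod>r\<leftarrow>rs. [:-r, 1::real:]) \<noteq> 0"
proof (induction rs)
  case (Cons r rs)
  have "[:-r, 1::real:] \<noteq> 0" by simp
  thus ?case using Cons by (simp only: list.map prod_list.Cons mult_eq_0_iff de_Morgan_disj) blast
qed simp

lemma rootsum:
  fixes rs :: "real list"
  assumes "finite S" "{a. poly (\<Prod>r\<leftarrow>rs. [:-r, 1:]) a = 0} \<subseteq> S"
  shows "(\<Sum>a\<in>S. real (Polynomial.order a (\<Prod>r\<leftarrow>rs. [:-r, 1:])) * \<bar>a\<bar>) = (\<Sum>r\<leftarrow>rs. \<bar>r\<bar>)"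
  using assms(2)
proof (induction rs)
  case Nil
  show ?case by (simp add: order_0I)
next
  case (Cons r rs)
  let ?p = "\<Prod>r\<leftarrow>rs. [:-r, 1:]"
  have p0: "?p \<noteq> 0" by (rule prodlin_nz)
  have "[:-r, 1::real:] \<noteq> 0" by simp
  hence rp0: "[:-r, 1:] * ?p \<noteq> 0" using p0 by (simp only: mult_eq_0_iff de_Morgan_disj) blast
  have sub: "{a. poly ?p a = 0} \<subseteq> S" using Cons.prems by auto
  have rS: "r \<in> S" using Cons.prems by auto
  have "(\<Sum>a\<in>S. real (Polynomial.order a ([:-r, 1:] * ?p)) * \<bar>a\<bar>)
      = (\<Sum>a\<in>S. (if a = r then \<bar>a\<bar> else 0) + real (Polynomial.order a ?p) * \<bar>a\<bar>)"
    by (intro sum.cong refl) (subst order_mult[OF rp0], simp add: order_linear' distrib_right)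
  also have "\<dots> = \<bar>r\<bar> + (\<Sum>a\<in>S. real (Polynomial.order a ?p) * \<bar>a\<bar>)"
    using assms(1) rS by (simp add: sum.distrib)
  finally show ?case using Cons.IH[OF sub] by simp
qed

lemma rootsum': 
  fixes rs :: "real list"
  shows "(\<Sum>a\<in>{a. poly (\<Prod>r\<leftarrow>rs. [:-r, 1:]) a = 0}. real (Polynomial.order a (\<Prod>r\<leftarrow>rs. [:-r, 1:])) * \<bar>a\<bar>) = (\<Sum>r\<leftarrow>rs. \<bar>r\<bar>)"
proof (rule rootsum)
  have "(\<Prod>r\<leftarrow>rs. [:-r, 1:]) \<noteq> 0" by (rule prodlin_nz)
  thus "finite {a. poly (\<Prod>r\<leftarrow>rs. [:-r, 1:]) a = 0}" by (rule poly_roots_finite)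
qed auto


lemma trace_norm_bound:
  fixes D :: "real mat" and F :: "'i set" and c :: "'i \<Rightarrow> real" and Ms :: "'i \<Rightarrow> nat \<Rightarrow> nat \<Rightarrow> real"
  assumes D: "D \<in> carrier_mat n n" and F: "finite F"
    and dec: "\<And>a b. a < n \<Longrightarrow> b < n \<Longrightarrow> D $$ (a, b) = (\<Sum>s\<in>F. c s * Ms s a b)"
    and psd: "\<And>s v. s \<in> F \<Longrightarrow> qf n (Ms s) v \<in> \<real> \<and> Re (qf n (Ms s) v) \<ge> 0"
  shows "trace_norm_sym D \<le> (\<Sum>s\<in>F. \<bar>c s\<bar> * (\<Sum>a<n. Ms s a a))"
proof -
  define A where "A = map_mat complex_of_real D"
  have A: "A \<in> carrier_mat n n" using D unfolding A_def by auto
  define Af where "Af a b = A $$ (a, b)" for a b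
  have Afd: "Af a b = complex_of_real (\<Sum>s\<in>F. c s * Ms s a b)" if "a < n" "b < n" for a b
    unfolding Af_def A_def using D that dec by simp
  obtain u where o: "\<forall>j<n. \<forall>m<n. j \<noteq> m \<longrightarrow> ip n (u j) (u m) = 0" and nz: "\<forall>j<n. ip n (u j) (u j) \<noteq> 0"
    and tri: "\<forall>i<n. \<forall>j<n. i < j \<longrightarrow> ip n (mv n (\<lambda>a b. A $$ (a, b)) (u i)) (u j) = 0"
    using flag[OF A] by blast
  have cpA: "char_poly A = (\<Prod>i \<leftarrow> [0..<n]. [:- (ip n (mv n Af (u i)) (u i) / ip n (u i) (u i)), 1:])"
    unfolding Af_def by (rule flag_charpoly[OF A o nz tri])
  define q where "q s i = qf n (Ms s) (u i)" for s i
  define w where "w i = Re (ip n (u i) (u i))" for i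
  have wpos: "w i > 0" and ipw: "ip n (u i) (u i) = complex_of_real (w i)" if "i < n" for i
    using ip_self_pos[of n "u i"] nz that unfolding w_def by auto
  have qr: "q s i = complex_of_real (Re (q s i))" "Re (q s i) \<ge> 0" if "s \<in> F" for s i
    using psd[OF that, of "u i"] unfolding q_def by (auto simp: Reals_def)
  define r where "r i = (\<Sum>s\<in>F. c s * Re (q s i)) / w i" for i
  have lam: "ip n (mv n Af (u i)) (u i) / ip n (u i) (u i) = complex_of_real (r i)" if "i < n" for i
  proof -
    have "ip n (mv n Af (u i)) (u i) = (\<Sum>s\<in>F. complex_of_real (c s) * q s i)"
      unfolding q_def by (rule qf_decomp[OF Afd])
    also have "\<dots> = (\<Sum>s\<in>F. complex_of_real (c s * Re (q s i)))"
      by (intro sum.cong refl) (subst qr(1), auto)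
    finally show ?thesis unfolding r_def using ipw[OF that] by (simp add: of_real_sum)
  qed
  have "map_poly complex_of_real (char_poly D) = char_poly A"
    unfolding A_def by (rule of_real_hom.char_poly_hom[OF D, symmetric])
  also have "\<dots> = (\<Prod>i \<leftarrow> [0..<n]. [:- complex_of_real (r i), 1:])"
    unfolding cpA by (intro arg_cong[where f = prod_list] map_cong refl) (simp add: lam)
  also have "\<dots> = map_poly complex_of_real (\<Prod>x \<leftarrow> map r [0..<n]. [:- x, 1:])"
  proof -
    interpret m: map_poly_inj_idom_hom "of_real :: real \<Rightarrow> complex" ..
    show ?thesis by (simp add: m.hom_prod_list comp_def)
  qed
  finally have cpD: "char_poly D = (\<Prod>x \<leftarrow> map r [0..<n]. [:- x, 1:])"
  proof -
    interpret m: map_poly_inj_idom_hom "of_real :: real \<Rightarrow> complex" ..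
    assume "map_poly complex_of_real (char_poly D) = map_poly complex_of_real (\<Prod>x \<leftarrow> map r [0..<n]. [:- x, 1:])"
    thus ?thesis by simp
  qed
  have "trace_norm_sym D = (\<Sum>x\<leftarrow>map r [0..<n]. \<bar>x\<bar>)"
    unfolding trace_norm_sym_def cpD by (rule rootsum')
  also have "\<dots> = (\<Sum>i<n. \<bar>r i\<bar>)" by (simp add: sum_list_distinct_conv_sum_set atLeast0LessThan)
  also have "\<dots> \<le> (\<Sum>i<n. \<Sum>s\<in>F. \<bar>c s\<bar> * (Re (q s i) / w i))"
  proof (intro sum_mono)
    fix i assume i: "i \<in> {..<n}"
    have "\<bar>r i\<bar> = \<bar>\<Sum>s\<in>F. c s * Re (q s i)\<bar> / w i" unfolding r_def using wpos i by (simp add: abs_div_pos)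
    also have "\<dots> \<le> (\<Sum>s\<in>F. \<bar>c s\<bar> * Re (q s i)) / w i"
    proof (rule divide_right_mono)
      have "\<bar>\<Sum>s\<in>F. c s * Re (q s i)\<bar> \<le> (\<Sum>s\<in>F. \<bar>c s * Re (q s i)\<bar>)" by (rule sum_abs)
      also have "\<dots> = (\<Sum>s\<in>F. \<bar>c s\<bar> * Re (q s i))" using qr(2) by (intro sum.cong refl) (simp add: abs_mult)
      finally show "\<bar>\<Sum>s\<in>F. c s * Re (q s i)\<bar> \<le> (\<Sum>s\<in>F. \<bar>c s\<bar> * Re (q s i))" .
    qed (use wpos[of i] i in simp_all)
    finally show "\<bar>r i\<bar> \<le> (\<Sum>s\<in>F. \<bar>c s\<bar> * (Re (q s i) / w i))" by (simp add: sum_divide_distrib)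
  qed
  also have "\<dots> = (\<Sum>s\<in>F. \<bar>c s\<bar> * (\<Sum>i<n. Re (q s i) / w i))"
    by (subst sum.swap) (simp add: sum_distrib_left)
  also have "\<dots> = (\<Sum>s\<in>F. \<bar>c s\<bar> * (\<Sum>a<n. Ms s a a))"
  proof (rule sum.cong[OF refl])
    fix s assume s: "s \<in> F"
    have "(\<Sum>i<n. q s i / ip n (u i) (u i)) = (\<Sum>a<n. complex_of_real (Ms s a a))"
      unfolding q_def qf_def by (rule flag_trace[OF o nz])
    moreover have "(\<Sum>i<n. q s i / ip n (u i) (u i)) = complex_of_real (\<Sum>i<n. Re (q s i) / w i)"
      unfolding of_real_sum
    proof (rule sum.cong[OF refl])
      fix i assume "i \<in> {..<n}"
      hence i: "i < n" by simp
      show "q s i / ip n (u i) (u i) = complex_of_real (Re (q s i) / w i)"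
        by (subst qr(1)[OF s], subst ipw[OF i]) simp
    qed
    ultimately have "complex_of_real (\<Sum>i<n. Re (q s i) / w i) = complex_of_real (\<Sum>a<n. Ms s a a)"
      by (simp add: of_real_sum)
    hence "(\<Sum>i<n. Re (q s i) / w i) = (\<Sum>a<n. Ms s a a)" by (simp only: of_real_eq_iff)
    thus "\<bar>c s\<bar> * (\<Sum>i<n. Re (q s i) / w i) = \<bar>c s\<bar> * (\<Sum>a<n. Ms s a a)" by simp
  qed
  finally show ?thesis .
qed

lemma ksubsets_finite: "finite (ksubsets d k)"
  unfolding ksubsets_def by (rule finite_subset[of _ "Pow {1..d}"]) auto

lemma ksub_list: "distinct (ksub_list d k)" "set (ksub_list d k) = ksubsets d k"
proof -
  have "\<exists>xs. distinct xs \<and> set xs = ksubsets d k"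
    using finite_distinct_list[OF ksubsets_finite] by metis
  hence "distinct (ksub_list d k) \<and> set (ksub_list d k) = ksubsets d k"
    unfolding ksub_list_def by (rule someI_ex)
  thus "distinct (ksub_list d k)" "set (ksub_list d k) = ksubsets d k" by auto
qed

lemma card_ksubsets: "card (ksubsets d k) = d choose k"
  unfolding ksubsets_def using n_subsets[of "{1..d}" k] by simp

lemma length_ksub_list: "length (ksub_list d k) = d choose k"
  using distinct_card[OF ksub_list(1)] ksub_list(2) card_ksubsets by metis

lemma ksub_list_nth: "i < length (ksub_list d k) \<Longrightarrow> ksub_list d k ! i \<subseteq> {1..d} \<and> card (ksub_list d k ! i) = k"
  using nth_mem[of i "ksub_list d k"] ksub_list(2) unfolding ksubsets_def by auto

lemma alt_identity:
  fixes m t K :: nat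
  assumes "m \<le> t + K"
  shows "(\<Sum>j\<le>K. (-1::real)^j * real ((t + j) choose t) * real (m choose (t + j))) = (if m = t then 1 else 0)"
proof (cases "m < t")
  case True
  hence "(\<Sum>j\<le>K. (-1::real)^j * real ((t + j) choose t) * real (m choose (t + j))) = 0"
    by (intro sum.neutral) auto
  thus ?thesis using True by simp
next
  case False
  define r where "r = m - t"
  have m: "m = t + r" using False unfolding r_def by simp
  have rK: "r \<le> K" using assms m by simp
  have e: "real ((t + j) choose t) * real (m choose (t + j)) = real (m choose t) * real (r choose j)" for j
  proof (cases "j \<le> r")
    case True
    have "(m choose (t + j)) * ((t + j) choose t) = (m choose t) * ((m - t) choose (t + j - t))"
      by (rule choose_mult) (use True m in auto)
    thus ?thesis unfolding r_def[symmetric] by (simp add: mult.commute flip: of_nat_mult)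
  next
    case False thus ?thesis using m by (simp add: binomial_eq_0)
  qed
  have "(\<Sum>j\<le>K. (-1::real)^j * real ((t + j) choose t) * real (m choose (t + j)))
      = real (m choose t) * (\<Sum>j\<le>K. (-1::real)^j * real (r choose j))"
    unfolding sum_distrib_left by (intro sum.cong refl) (simp only: mult.assoc e, simp only: mult_ac)
  also have "(\<Sum>j\<le>K. (-1::real)^j * real (r choose j)) = (\<Sum>j\<le>r. (-1::real)^j * real (r choose j))"
    by (rule sum.mono_neutral_right) (use rK in auto)
  also have "\<dots> = (if r = 0 then 1 else 0)"
    using choose_alternating_sum[of r, where 'a = real] by auto
  finally show ?thesis using m by auto
qed

lemma row_identity:
  fixes t K :: nat
  shows "(\<Sum>j\<le>K. real ((t + j) choose t) * real ((t + K) choose (t + j))) = real ((t + K) choose t) * 2 ^ K"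
proof -
  have e: "real ((t + j) choose t) * real ((t + K) choose (t + j)) = real ((t + K) choose t) * real (K choose j)"
    if "j \<le> K" for j
  proof -
    have "((t + K) choose (t + j)) * ((t + j) choose t) = ((t + K) choose t) * ((t + K - t) choose (t + j - t))"
      by (rule choose_mult) (use that in auto)
    thus ?thesis by (simp add: mult.commute flip: of_nat_mult)
  qed
  have "(\<Sum>j\<le>K. real ((t + j) choose t) * real ((t + K) choose (t + j))) = (\<Sum>j\<le>K. real ((t + K) choose t) * real (K choose j))"
    by (intro sum.cong refl) (simp add: e)
  also have "\<dots> = real ((t + K) choose t) * real (\<Sum>j\<le>K. K choose j)" by (simp add: sum_distrib_left)
  also have "(\<Sum>j\<le>K. K choose j) = 2 ^ K" by (rule choose_row_sum)
  finally show ?thesis by simp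
qed

lemma psd_fam:
  fixes X :: "nat \<Rightarrow> nat set"
  assumes X: "\<And>a. a < n \<Longrightarrow> X a \<subseteq> {1..d}"
  shows "qf n (\<lambda>a b. real (card (X a \<inter> X b) choose s)) v
     = complex_of_real (\<Sum>S\<in>ksubsets d s. (cmod (\<Sum>b<n. if S \<subseteq> X b then v b else 0))\<^sup>2)"
proof -
  define T where "T = ksubsets d s"
  have fT: "finite T" unfolding T_def by (rule ksubsets_finite)
  have cc: "real (card (X a \<inter> X b) choose s) = (\<Sum>S\<in>T. if S \<subseteq> X a \<and> S \<subseteq> X b then 1 else 0)"
    if "a < n" "b < n" for a b
  proof -
    have fin: "finite (X a \<inter> X b)" using X[OF that(1)] finite_subset by blast
    have "card (X a \<inter> X b) choose s = card {S. S \<subseteq> X a \<inter> X b \<and> card S = s}"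
      by (rule n_subsets[OF fin, symmetric])
    also have "{S. S \<subseteq> X a \<inter> X b \<and> card S = s} = {S \<in> T. S \<subseteq> X a \<and> S \<subseteq> X b}"
      unfolding T_def ksubsets_def using X[OF that(1)] by auto
    also have "{S \<in> T. S \<subseteq> X a \<and> S \<subseteq> X b} = T \<inter> {S. S \<subseteq> X a \<and> S \<subseteq> X b}" by blast
    finally show ?thesis using fT by (simp add: sum.If_cases)
  qed
  define z where "z S = (\<Sum>b<n. if S \<subseteq> X b then v b else 0)" for S
  have "qf n (\<lambda>a b. real (card (X a \<inter> X b) choose s)) v
      = (\<Sum>a<n. \<Sum>b<n. \<Sum>S\<in>T. (if S \<subseteq> X b then v b else 0) * cnj (if S \<subseteq> X a then v a else 0))"
    unfolding qf_def ip_def mv_def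
    by (intro sum.cong refl) (auto simp: cc of_real_sum sum_distrib_left sum_distrib_right intro!: sum.cong)
  also have "\<dots> = (\<Sum>a<n. \<Sum>S\<in>T. \<Sum>b<n. (if S \<subseteq> X b then v b else 0) * cnj (if S \<subseteq> X a then v a else 0))"
    by (rule sum.cong[OF refl], rule sum.swap)
  also have "\<dots> = (\<Sum>S\<in>T. \<Sum>a<n. \<Sum>b<n. (if S \<subseteq> X b then v b else 0) * cnj (if S \<subseteq> X a then v a else 0))"
    by (rule sum.swap)
  also have "\<dots> = (\<Sum>S\<in>T. z S * cnj (z S))"
    unfolding z_def by (simp add: sum_distrib_left sum_distrib_right mult.commute)
  also have "\<dots> = complex_of_real (\<Sum>S\<in>T. (cmod (z S))\<^sup>2)"
    by (simp only: of_real_sum complex_norm_square)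
  finally show ?thesis unfolding T_def z_def .
qed


lemma johnson_bound:
  assumes tk: "t \<le> k" and kd: "k \<le> d"
  shows "trace_norm_sym (johnson_mat d k t) \<le> real (d choose k) * real (k choose t) * 2 ^ (k - t)"
proof -
  define xs where "xs = ksub_list d k"
  define n where "n = length xs"
  define X where "X a = xs ! a" for a
  define K where "K = k - t"
  have kK: "k = t + K" using tk unfolding K_def by simp
  have Xp: "X a \<subseteq> {1..d}" "card (X a) = k" if "a < n" for a
    using ksub_list_nth[of a d k] that unfolding X_def n_def xs_def by auto
  have D: "johnson_mat d k t = mat n n (\<lambda>(i, j). if card (X i \<inter> X j) = t then 1 else 0)"
    unfolding johnson_mat_def Let_def X_def n_def xs_def by simp
  define c where "c j = (-1::real)^j * real ((t + j) choose t)" for j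
  define Ms where "Ms j a b = real (card (X a \<inter> X b) choose (t + j))" for j a b
  have "trace_norm_sym (johnson_mat d k t) \<le> (\<Sum>j\<in>{..K}. \<bar>c j\<bar> * (\<Sum>a<n. Ms j a a))"
  proof (rule trace_norm_bound[where c = c and Ms = Ms and F = "{..K}"])
    show "johnson_mat d k t \<in> carrier_mat n n" unfolding D by simp
    show "finite {..K}" by simp
  next
    fix a b assume ab: "a < n" "b < n"
    have "card (X a \<inter> X b) \<le> card (X a)"
      by (rule card_mono) (use Xp[OF ab(1)] finite_subset in auto)
    hence m: "card (X a \<inter> X b) \<le> t + K" using Xp[OF ab(1)] kK by simp
    show "johnson_mat d k t $$ (a, b) = (\<Sum>j\<in>{..K}. c j * Ms j a b)"
      unfolding D c_def Ms_def using ab alt_identity[OF m] by (simp add: mult.assoc)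
  next
    fix j v
    have "qf n (Ms j) v = complex_of_real (\<Sum>S\<in>ksubsets d (t + j). (cmod (\<Sum>b<n. if S \<subseteq> X b then v b else 0))\<^sup>2)"
      unfolding Ms_def by (rule psd_fam) (use Xp in auto)
    moreover have "(\<Sum>S\<in>ksubsets d (t + j). (cmod (\<Sum>b<n. if S \<subseteq> X b then v b else 0))\<^sup>2) \<ge> 0"
      by (intro sum_nonneg) auto
    ultimately show "qf n (Ms j) v \<in> \<real> \<and> Re (qf n (Ms j) v) \<ge> 0" by simp
  qed
  also have "\<dots> = (\<Sum>j\<le>K. real ((t + j) choose t) * (real n * real (k choose (t + j))))"
  proof (intro sum.cong refl)
    fix j
    have "(\<Sum>a<n. Ms j a a) = (\<Sum>a<n. real (k choose (t + j)))"
      unfolding Ms_def by (intro sum.cong refl) (simp add: Xp)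
    thus "\<bar>c j\<bar> * (\<Sum>a<n. Ms j a a) = real ((t + j) choose t) * (real n * real (k choose (t + j)))"
      unfolding c_def by (simp add: abs_mult)
  qed
  also have "\<dots> = real n * (\<Sum>j\<le>K. real ((t + j) choose t) * real ((t + K) choose (t + j)))"
    unfolding kK by (simp add: sum_distrib_left mult_ac)
  also have "\<dots> = real n * (real ((t + K) choose t) * 2 ^ K)" by (simp only: row_identity)
  finally show ?thesis unfolding n_def xs_def length_ksub_list K_def using kK by (simp add: mult_ac)
qed

lemma binom_step_bound:
  fixes a m :: nat
  assumes am: "m \<le> a"
  shows "real ((a + i) choose m) \<le> real (a choose m) * (1 + real m / (real a - real m + 1)) ^ i"
proof (induction i)
  case 0 thus ?case by simp
next
  case (Suc i)
  define N where "N = a + i"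
  have Nm: "m \<le> N" using am unfolding N_def by simp
  have "(Suc N - m) * (Suc N choose m) = Suc N * (N choose m)"
    using binomial_absorb_comp[of "Suc N" m] by simp
  hence h: "real (Suc N - m) * real (Suc N choose m) = real (Suc N) * real (N choose m)"
    by (metis of_nat_mult)
  have pos: "real (Suc N - m) \<noteq> 0" using Nm by simp
  have "real (Suc N choose m) = real (Suc N - m) * real (Suc N choose m) / real (Suc N - m)"
    using pos by simp
  also have "\<dots> = real (N choose m) * (real (Suc N) / real (Suc N - m))" unfolding h by simp
  finally have e: "real (Suc N choose m) = real (N choose m) * (real (Suc N) / real (Suc N - m))" .
  have q: "real (Suc N) / real (Suc N - m) \<le> 1 + real m / (real a - real m + 1)"
  proof -
    have d: "real (Suc N - m) = real N - real m + 1" using Nm by (simp add: of_nat_diff)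
    have p: "real a - real m + 1 > 0" using am by simp
    have "real (Suc N) / real (Suc N - m) = 1 + real m / (real N - real m + 1)"
      unfolding d using Nm by (simp add: field_simps)
    also have "\<dots> \<le> 1 + real m / (real a - real m + 1)"
      using p unfolding N_def by (intro add_left_mono divide_left_mono) auto
    finally show ?thesis .
  qed
  have "real ((a + Suc i) choose m) = real (Suc N choose m)" unfolding N_def by simp
  also have "\<dots> = real (N choose m) * (real (Suc N) / real (Suc N - m))" by (rule e)
  also have "\<dots> \<le> real (a choose m) * (1 + real m / (real a - real m + 1)) ^ i * (1 + real m / (real a - real m + 1))"
    using Suc.IH q unfolding N_def by (intro mult_mono) auto
  finally show ?case by (simp add: mult_ac)
qed

lemma binom_ratio_bound:
  fixes a m :: nat
  assumes am: "m \<le> a"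
  shows "real ((a + m) choose m) \<le> real (a choose m) * exp (real m * real m / (real a - real m + 1))"
proof -
  have p: "real a - real m + 1 > 0" using am by simp
  have "real ((a + m) choose m) \<le> real (a choose m) * (1 + real m / (real a - real m + 1)) ^ m"
    by (rule binom_step_bound[OF am])
  also have "(1 + real m / (real a - real m + 1)) ^ m \<le> exp (real m / (real a - real m + 1)) ^ m"
    by (rule power_mono) (use p in \<open>auto simp: exp_ge_add_one_self\<close>)
  also have "\<dots> = exp (real m * real m / (real a - real m + 1))"
    by (simp add: exp_of_nat_mult[symmetric])
  finally show ?thesis by (simp add: mult_left_mono)
qed


lemma ratio_const:
  fixes c :: real and k d t :: nat
  assumes c: "c > 0" and k1: "1 \<le> k" and kc: "real k \<le> c * sqrt (real d)" and kd: "2 * k \<le> d" and tk: "t < k"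
  shows "real (k - t) * real (k - t) / (real (d - k) - real (k - t) + 1) \<le> 2 * c^2 + 16 * c^4"
proof -
  define x where "x = real k"
  define y where "y = real d"
  have x1: "x \<ge> 1" unfolding x_def using k1 by simp
  have xy: "2 * x \<le> y" unfolding x_def y_def using kd by simp
  have den: "real (d - k) - real (k - t) + 1 \<ge> y - 2 * x + 1"
    unfolding x_def y_def using kd tk by (simp add: of_nat_diff)
  have den1: "y - 2 * x + 1 \<ge> 1" using xy by simp
  have mm: "real (k - t) * real (k - t) \<le> x * x"
    unfolding x_def using tk by (intro mult_mono) auto
  have step: "real (k - t) * real (k - t) / (real (d - k) - real (k - t) + 1) \<le> x * x / (y - 2 * x + 1)"
    by (rule frac_le) (use mm den den1 in auto)
  have y0: "y \<ge> 0" unfolding y_def by simp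
  have sq: "x * x \<le> c^2 * y"
  proof -
    have "x * x \<le> (c * sqrt y) * (c * sqrt y)"
      using kc x1 unfolding x_def[symmetric] y_def[symmetric] by (intro mult_mono) auto
    also have "\<dots> = c^2 * y" using y0 by (simp add: power2_eq_square algebra_simps)
    finally show ?thesis .
  qed
  have "x * x / (y - 2 * x + 1) \<le> 2 * c^2 + 16 * c^4"
  proof (cases "4 * x \<le> y")
    case True
    have yp: "y > 0" using x1 True by simp
    have "x * x / (y - 2 * x + 1) \<le> x * x / (y / 2)"
      by (rule divide_left_mono) (use True yp in auto)
    also have "\<dots> = 2 * (x * x) / y" by simp
    also have "\<dots> \<le> 2 * (c^2 * y) / y" by (rule divide_right_mono) (use sq yp in auto)
    also have "\<dots> = 2 * c^2" using yp by simp
    finally show ?thesis using c by (smt (verit) zero_le_power)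
  next
    case False
    have "c^2 * y < c^2 * (4 * x)" by (rule mult_strict_left_mono) (use False c in auto)
    hence lt: "x * x < (4 * c^2) * x" using sq by (simp add: mult_ac)
    have xc: "x < 4 * c^2"
    proof (rule ccontr)
      assume "\<not> x < 4 * c^2"
      hence "(4 * c^2) * x \<le> x * x" by (intro mult_right_mono) (use x1 in auto)
      thus False using lt by linarith
    qed
    have "x * x \<le> (4 * c^2) * (4 * c^2)" using xc x1 by (intro mult_mono) auto
    hence "x * x \<le> 16 * c^4" by (simp add: power_def)
    moreover have "x * x / (y - 2 * x + 1) \<le> x * x"
    proof -
      have "x * x / (y - 2 * x + 1) \<le> x * x / 1"
        by (rule divide_left_mono) (use den1 in auto)
      thus ?thesis by simp
    qed
    ultimately show ?thesis using c by (smt (verit) zero_le_power)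
  qed
  with step show ?thesis by linarith
qed


theorem fact3:
  fixes c :: real
  assumes "c > 0"
  shows "\<exists>C > 0. \<forall>d k t :: nat.
           1 \<le> k \<and> real k \<le> c * sqrt (real d) \<and> 2 * k \<le> d \<and> t \<le> k - 1 \<longrightarrow>
           trace_norm_sym (johnson_mat d k t)
             \<le> C * real ((d - k) choose (k - t)) * real (d choose t) * 2 ^ (k - t)"
proof (intro exI[of _ "exp (2 * c^2 + 16 * c^4)"] conjI allI impI)
  show "exp (2 * c^2 + 16 * c^4) > 0" by simp
  fix d k t :: nat
  assume h: "1 \<le> k \<and> real k \<le> c * sqrt (real d) \<and> 2 * k \<le> d \<and> t \<le> k - 1"
  hence k1: "1 \<le> k" and kc: "real k \<le> c * sqrt (real d)" and kd: "2 * k \<le> d" and tk: "t < k" by auto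
  define a where "a = d - k"
  define m where "m = k - t"
  have am: "m \<le> a" unfolding a_def m_def using kd by simp
  have dt: "d - t = a + m" unfolding a_def m_def using kd tk by simp
  have "trace_norm_sym (johnson_mat d k t) \<le> real (d choose k) * real (k choose t) * 2 ^ (k - t)"
    by (rule johnson_bound) (use tk kd in auto)
  also have "real (d choose k) * real (k choose t) = real (d choose t) * real ((a + m) choose m)"
  proof -
    have "(d choose k) * (k choose t) = (d choose t) * ((d - t) choose (k - t))"
      by (rule choose_mult) (use tk kd in auto)
    thus ?thesis unfolding dt m_def[symmetric] by (metis of_nat_mult)
  qed
  also have "real (d choose t) * real ((a + m) choose m) * 2 ^ (k - t)
      \<le> real (d choose t) * (real (a choose m) * exp (real m * real m / (real a - real m + 1))) * 2 ^ (k - t)"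
    by (intro mult_right_mono mult_left_mono binom_ratio_bound[OF am]) auto
  also have "\<dots> \<le> real (d choose t) * (real (a choose m) * exp (2 * c^2 + 16 * c^4)) * 2 ^ (k - t)"
  proof -
    have "real m * real m / (real a - real m + 1) \<le> 2 * c^2 + 16 * c^4"
      unfolding a_def m_def by (rule ratio_const[OF \<open>c > 0\<close> k1 kc kd tk])
    thus ?thesis by (intro mult_right_mono mult_left_mono) auto
  qed
  also have "\<dots> = exp (2 * c^2 + 16 * c^4) * real ((d - k) choose (k - t)) * real (d choose t) * 2 ^ (k - t)"
    unfolding a_def m_def by (simp add: mult_ac)
  finally show "trace_norm_sym (johnson_mat d k t) \<le> exp (2 * c^2 + 16 * c^4) * real ((d - k) choose (k - t)) * real (d choose t) * 2 ^ (k - t)" .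
qed

end
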